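(* Assume $\sup_n\|D_n\|<\infty$. Let $z=x+iy$ with $x\in\mathbb{R}$, $y>0$, let $(F_n(z))_{n\ge0}$ be the Jost solution at $z$, and let $\phi_n=\phi_n(x)$, $\psi_n=\psi_n(x)$ be the Dirichlet and Neumann solutions at the real energy $x$. Then for every $n\ge1$, $$F_n(z)=\psi_n-\phi_nM^\phi_+(z)D_0-iy\,\psi_n\sum_{k=1}^nD_0^{-1}\phi_k^{t}F_k(z)+iy\,\phi_n\sum_{k=1}^nD_0^{-1}\psi_k^{t}F_k(z),$$ and $F_0(z)=\mathbb{I}$.
   Context: Fix $l\in\mathbb{N}$. Let $(D_n)_{n\in\mathbb{Z}}$, $(V_n)_{n\in\mathbb{Z}}$ be sequences of real symmetric $l\times l$ matrices with every $D_n$ invertible. For $z\in\mathbb{C}$ the eigenvalue equation is $D_{n-1}\mathbf{u}_{n-1}+D_n\mathbf{u}_{n+1}+V_n\mathbf{u}_n=z\mathbf{u}_n$; a sequence of $l\times l$ matrices is a (matrix) solution if each column is a solution. The Dirichlet solution $\phi(z)$ and Neumann solution $\psi(z)$ are the matrix solutions for $n\ge1$ with $\phi_0=0,\ \phi_1=\mathbb{I}$ and $\psi_0=\mathbb{I},\ \psi_1=0$. Jost solution and Weyl function: when $\sup_n\|D_n\|<\infty$, for each $z\in\mathbb{C}\setminus\mathbb{R}$ there is a unique sequence $(F_n(z))_{n\ge0}$ of $l\times l$ matrices with $D_nF_{n+1}+D_{n-1}F_{n-1}+V_nF_n=zF_n$ for all $n\ge1$, $F_0=\mathbb{I}$, and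 $\sum_{n\ge0}\|F_n(z)\|^2<\infty$; the matrix Weyl–Titchmarsh function is $M^\phi_+(z):=-F_1(z)D_0^{-1}$. $A^t$ denotes the transpose. *)

theory Defs
  imports "HOL-Analysis.Analysis"
begin

definition cmat :: "real^'l^'l \<Rightarrow> complex^'l^'l" where
  "cmat A = (\<chi> i j. complex_of_real (A $ i $ j))"

text \<open>Matrix solutions for n \<ge> 1 of
  D_(n-1) u_(n-1) + D_n u_(n+1) + V_n u_n = z u_n, with prescribed values at 0 and 1,
  obtained by solving for u_(n+1) (D_n invertible).\<close>
fun mat_sol :: "(int \<Rightarrow> real^'l^'l) \<Rightarrow> (int \<Rightarrow> real^'l^'l) \<Rightarrow> complex
    \<Rightarrow> complex^'l^'l \<Rightarrow> complex^'l^'l \<Rightarrow> nat \<Rightarrow> complex^'l^'l" where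
  "mat_sol D V z a b 0 = a"
| "mat_sol D V z a b (Suc 0) = b"
| "mat_sol D V z a b (Suc (Suc n)) =
     matrix_inv (cmat (D (int n + 1))) **
       (mat z ** mat_sol D V z a b (Suc n)
        - cmat (V (int n + 1)) ** mat_sol D V z a b (Suc n)
        - cmat (D (int n)) ** mat_sol D V z a b n)"

definition dirichlet_sol where "dirichlet_sol D V z = mat_sol D V z 0 (mat 1)"
definition neumann_sol where "neumann_sol D V z = mat_sol D V z (mat 1) 0"

definition is_jost_solution ::
  "(int \<Rightarrow> real^'l^'l) \<Rightarrow> (int \<Rightarrow> real^'l^'l) \<Rightarrow> complex \<Rightarrow> (nat \<Rightarrow> complex^'l^'l) \<Rightarrow> bool" where
  "is_jost_solution D V z F \<longleftrightarrow>
     (\<forall>n\<ge>1. cmat (D (int n)) ** F (n + 1) + cmat (D (int n - 1)) ** F (n - 1)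
             + cmat (V (int n)) ** F n = mat z ** F n)
   \<and> F 0 = mat 1
   \<and> summable (\<lambda>n. (norm (F n))^2)"

definition weyl_M :: "(int \<Rightarrow> real^'l^'l) \<Rightarrow> (nat \<Rightarrow> complex^'l^'l) \<Rightarrow> complex^'l^'l" where
  "weyl_M D F = - (F 1 ** matrix_inv (cmat (D 0)))"

end

theory Submission
  imports Defs
begin


lemma mm_add_r: "((A::'a::semiring_1^'n^'m) + B) ** C = A ** C + B ** C"
  by (simp add: matrix_matrix_mult_def vec_eq_iff distrib_right sum.distrib)
lemma mm_diff_l: "(A::'a::ring_1^'n^'m) ** (B - C) = A ** B - A ** C"
  by (simp add: matrix_matrix_mult_def vec_eq_iff right_diff_distrib sum_subtractf)
lemma mm_diff_r: "((A::'a::ring_1^'n^'m) - B) ** C = A ** C - B ** C"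
  by (simp add: matrix_matrix_mult_def vec_eq_iff left_diff_distrib sum_subtractf)
lemma mm_neg_l: "(- (A::'a::ring_1^'n^'m)) ** B = - (A ** B)"
  by (simp add: matrix_matrix_mult_def vec_eq_iff sum_negf)
lemma mm_neg_r: "(A::'a::ring_1^'n^'m) ** (- B) = - (A ** B)"
  by (simp add: matrix_matrix_mult_def vec_eq_iff sum_negf)
lemma mat_comm: "mat c ** (A::'a::comm_semiring_1^'n^'n) = A ** mat c"
  unfolding matrix_matrix_mult_def mat_def
  by (simp add: vec_eq_iff if_distrib if_distribR mult.commute cong: if_cong)
lemma mat_left_comm: "(A::'a::comm_semiring_1^'n^'n) ** (mat c ** B) = mat c ** (A ** B)"
  by (metis mat_comm matrix_mul_assoc)
lemma transpose_add: "transpose (A + B) = transpose A + transpose B"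
  by (vector transpose_def)
lemma transpose_diff: "transpose ((A::'a::ab_group_add^'n^'m) - B) = transpose A - transpose B"
  by (vector transpose_def)
lemma transpose_neg: "transpose (- (A::'a::ab_group_add^'n^'m)) = - transpose A"
  by (vector transpose_def)
lemma transpose_zero: "transpose 0 = 0"
  by (simp add: transpose_def vec_eq_iff)
lemma mat_add: "mat (a + b) = mat a + (mat b :: 'a::monoid_add^'n^'n)"
  by (simp add: mat_def vec_eq_iff)

lemma cmat_mult: "cmat (A ** B) = cmat A ** cmat B"
  by (simp add: cmat_def matrix_matrix_mult_def vec_eq_iff)
lemma cmat_one: "cmat (mat 1) = mat 1"
  by (simp add: cmat_def mat_def vec_eq_iff)
lemma cmat_transpose: "cmat (transpose A) = transpose (cmat A)"
  by (vector transpose_def cmat_def)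

lemma inv_props:
  assumes "invertible (A::'a::semiring_1^'n^'m)"
  shows "A ** matrix_inv A = mat 1" "matrix_inv A ** A = mat 1"
proof -
  have "\<exists>A'. A ** A' = mat 1 \<and> A' ** A = mat 1" using assms invertible_def by blast
  then have "A ** matrix_inv A = mat 1 \<and> matrix_inv A ** A = mat 1"
    unfolding matrix_inv_def by (rule someI_ex)
  then show "A ** matrix_inv A = mat 1" "matrix_inv A ** A = mat 1" by auto
qed

lemma cmat_inv:
  assumes "invertible A"
  shows "cmat A ** matrix_inv (cmat A) = mat 1" "matrix_inv (cmat A) ** cmat A = mat 1"
proof -
  have "invertible (cmat A)" unfolding invertible_def
    using inv_props[OF assms] by (metis cmat_mult cmat_one)
  then show "cmat A ** matrix_inv (cmat A) = mat 1" "matrix_inv (cmat A) ** cmat A = mat 1"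
    using inv_props by auto
qed

lemma inv_sym:
  fixes A B :: "'a::comm_ring_1^'n^'n"
  assumes "transpose A = A" "A ** B = mat 1" "B ** A = mat 1"
  shows "transpose B = B"
proof -
  have "transpose B ** A = transpose (A ** B)" using assms(1) by (simp add: matrix_transpose_mul)
  then have "transpose B ** A = mat 1" by (simp add: assms(2))
  then have "transpose B = transpose B ** (A ** B)" using assms by simp
  also have "\<dots> = B" by (simp add: matrix_mul_assoc \<open>transpose B ** A = mat 1\<close>)
  finally show ?thesis .
qed


definition csc :: "'a::comm_ring_1 \<Rightarrow> 'a^'n^'n \<Rightarrow> 'a^'n^'n" where
  "csc c M = mat c ** M"
lemma csc_simps:
  fixes A B :: "'a::comm_ring_1^'n^'n"
  shows "A ** csc c B = csc c (A ** B)" "csc c A ** B = csc c (A ** B)"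
    "csc c (A + B) = csc c A + csc c B" "csc c (A - B) = csc c A - csc c B"
    "csc c (- A) = - csc c A" "csc c 0 = 0"
proof -
  show "A ** csc c B = csc c (A ** B)" unfolding csc_def by (rule mat_left_comm)
  show "csc c A ** B = csc c (A ** B)" unfolding csc_def by (rule matrix_mul_assoc[symmetric])
  show "csc c (A + B) = csc c A + csc c B" unfolding csc_def by (rule matrix_add_ldistrib)
  show "csc c (A - B) = csc c A - csc c B" unfolding csc_def by (rule mm_diff_l)
  show "csc c (- A) = - csc c A" unfolding csc_def by (rule mm_neg_r)
  show "csc c 0 = 0" unfolding csc_def by (rule times0_right)
qed



lemmas msimps = mm_add_r matrix_add_ldistrib mm_diff_l mm_diff_r mm_neg_l mm_neg_r
  matrix_mul_assoc[symmetric]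

theorem mainTheorem4:
  fixes D V :: "int \<Rightarrow> real^'l^'l" and x y :: real and F :: "nat \<Rightarrow> complex^'l^'l"
  assumes symD: "\<And>n. transpose (D n) = D n"
    and symV: "\<And>n. transpose (V n) = V n"
    and invD: "\<And>n. invertible (D n)"
    and bdd: "\<exists>C. \<forall>n. norm (D n) \<le> C"
    and y: "y > 0"
    and jost: "is_jost_solution D V (Complex x y) F"
  shows "(\<forall>n\<ge>1. F n =
            neumann_sol D V (complex_of_real x) n
            - dirichlet_sol D V (complex_of_real x) n ** weyl_M D F ** cmat (D 0)
            - mat (\<i> * complex_of_real y) ** neumann_sol D V (complex_of_real x) n **
                (\<Sum>k=1..n. matrix_inv (cmat (D 0)) ** transpose (dirichlet_sol D V (complex_of_real x) k) ** F k)
            + mat (\<i> * complex_of_real y) ** dirichlet_sol D V (complex_of_real x) n **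
                (\<Sum>k=1..n. matrix_inv (cmat (D 0)) ** transpose (neumann_sol D V (complex_of_real x) k) ** F k))
         \<and> F 0 = mat 1"
proof -
  define X :: "complex^'l^'l" where "X = mat (complex_of_real x)"
  define C :: "complex^'l^'l" where "C = mat (\<i> * complex_of_real y)"
  define d where "d = (\<lambda>n::nat. cmat (D (int n)))"
  define v where "v = (\<lambda>n::nat. cmat (V (int n)))"
  define Di where "Di = (\<lambda>n. matrix_inv (d n))"
  define ph where "ph = dirichlet_sol D V (complex_of_real x)"
  define ps where "ps = neumann_sol D V (complex_of_real x)"
  define T where "T = Di 0"
  have dDi: "d n ** Di n = mat 1" "Di n ** d n = mat 1" for n
    using cmat_inv[OF invD] unfolding d_def Di_def by auto
  have dDiA: "d n ** (Di n ** A) = A" "Di n ** (d n ** A) = A" for n and A :: "complex^'l^'l"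
    by (simp_all add: matrix_mul_assoc dDi)
  have dsym: "transpose (d n) = d n" for n by (simp add: d_def cmat_transpose[symmetric] symD)
  have vsym: "transpose (v n) = v n" for n by (simp add: v_def cmat_transpose[symmetric] symV)
  have Disym: "transpose (Di n) = Di n" for n using inv_sym[OF dsym dDi] .
  have Xsym: "transpose X = X" by (simp add: X_def)
  have Ccomm: "C ** A = csc (\<i> * complex_of_real y) A" for A :: "complex^'l^'l"
    unfolding C_def csc_def ..
  have recph: "ph (Suc (Suc n)) = Di (Suc n) ** (X ** ph (Suc n) - v (Suc n) ** ph (Suc n) - d n ** ph n)" for n
    by (simp add: ph_def dirichlet_sol_def Di_def d_def v_def X_def add.commute)
  have recps: "ps (Suc (Suc n)) = Di (Suc n) ** (X ** ps (Suc n) - v (Suc n) ** ps (Suc n) - d n ** ps n)" for n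
    by (simp add: ps_def neumann_sol_def Di_def d_def v_def X_def add.commute)
  have ph0: "ph 0 = 0" and ph1: "ph (Suc 0) = mat 1" and ps0: "ps 0 = mat 1" and ps1: "ps (Suc 0) = 0"
    by (simp_all add: ph_def ps_def dirichlet_sol_def neumann_sol_def)
  have trrec: "transpose (u (Suc (Suc n))) = (transpose (u (Suc n)) ** X - transpose (u (Suc n)) ** v (Suc n) - transpose (u n) ** d n) ** Di (Suc n)"
    if "u (Suc (Suc n)) = Di (Suc n) ** (X ** u (Suc n) - v (Suc n) ** u (Suc n) - d n ** u n)" for u n
    using that by (simp add: matrix_transpose_mul transpose_diff Disym Xsym vsym dsym)
  define R where "R = (\<lambda>a b. ps a ** (T ** transpose (ph b)) - ph a ** (T ** transpose (ps b)))"
  have Rrec2: "R a (Suc (Suc n)) = (R a (Suc n) ** X - R a (Suc n) ** v (Suc n) - R a n ** d n) ** Di (Suc n)" for a n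
    unfolding R_def trrec[OF recph] trrec[OF recps] by (simp add: msimps algebra_simps)
  have Rrec1: "R (Suc (Suc n)) b = Di (Suc n) ** (X ** R (Suc n) b - v (Suc n) ** R (Suc n) b - d n ** R n b)" for b n
    unfolding R_def recph[of n] recps[of n] by (simp add: msimps algebra_simps)
  have Rtr: "transpose (R a b) = - R b a" for a b
    unfolding R_def by (simp add: transpose_diff matrix_transpose_mul Disym T_def msimps)
  have Rind: "R n n = 0 \<and> R n (Suc n) = Di n \<and> R (Suc n) (Suc n) = 0" for n
  proof (induction n)
    case 0
    then show ?case by (simp add: R_def ph0 ph1 ps0 ps1 transpose_zero T_def)
  next
    case (Suc n)
    have a: "R (Suc n) n = - Di n" using Rtr[of n "Suc n"] Suc Disym
      by (metis minus_equation_iff)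
    have b: "R (Suc n) (Suc (Suc n)) = Di (Suc n)"
      unfolding Rrec2 using Suc a by (simp add: msimps dDiA)
    have c: "R n (Suc (Suc n)) = (Di n ** X - Di n ** v (Suc n)) ** Di (Suc n)"
      unfolding Rrec2 using Suc by simp
    have "R (Suc (Suc n)) (Suc (Suc n)) = 0"
      unfolding Rrec1 b c by (simp add: msimps dDiA)
    then show ?case using Suc b by simp
  qed
  have R0: "R n n = 0" and R1: "R n (Suc n) = Di n" for n using Rind by auto
  define S1 where "S1 = (\<lambda>n. \<Sum>k=1..n. T ** transpose (ph k) ** F k)"
  define S2 where "S2 = (\<lambda>n. \<Sum>k=1..n. T ** transpose (ps k) ** F k)"
  define W where "W = weyl_M D F"
  define A where "A = (\<lambda>n. mat 1 - C ** S1 n)"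
  define B where "B = (\<lambda>n. - (W ** d 0) + C ** S2 n)"
  define G where "G = (\<lambda>m n. ps m ** A n + ph m ** B n)"
  have S1suc: "S1 (Suc n) = S1 n + T ** (transpose (ph (Suc n)) ** F (Suc n))" for n
    by (simp add: S1_def matrix_mul_assoc)
  have S2suc: "S2 (Suc n) = S2 n + T ** (transpose (ps (Suc n)) ** F (Suc n))" for n
    by (simp add: S2_def matrix_mul_assoc)
  have F0: "F 0 = mat 1" using jost by (simp add: is_jost_solution_def)
  have zsplit: "mat (Complex x y) = X + C"
  proof -
    have "Complex x y = complex_of_real x + \<i> * complex_of_real y" by (simp add: complex_eq_iff)
    then show ?thesis by (simp add: X_def C_def mat_add)
  qed
  have jrec: "F (Suc (Suc n)) = Di (Suc n) ** ((X + C) ** F (Suc n) - v (Suc n) ** F (Suc n) - d n ** F n)" for n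
  proof -
    have J: "\<forall>n\<ge>1. cmat (D (int n)) ** F (n + 1) + cmat (D (int n - 1)) ** F (n - 1) + cmat (V (int n)) ** F n = mat (Complex x y) ** F n"
      using jost unfolding is_jost_solution_def by blast
    have e0: "cmat (D (int (Suc n))) ** F (Suc n + 1) + cmat (D (int (Suc n) - 1)) ** F (Suc n - 1) + cmat (V (int (Suc n))) ** F (Suc n) = mat (Complex x y) ** F (Suc n)"
      by (rule J[rule_format]) simp
    have e: "d (Suc n) ** F (Suc (Suc n)) + d n ** F n + v (Suc n) ** F (Suc n) = (X + C) ** F (Suc n)"
      using e0 unfolding zsplit d_def v_def by simp
    then have "d (Suc n) ** F (Suc (Suc n)) = (X + C) ** F (Suc n) - v (Suc n) ** F (Suc n) - d n ** F n"
      by (simp add: algebra_simps eq_diff_eq)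
    then show ?thesis using dDiA(2)[of "Suc n" "F (Suc (Suc n))"] by simp
  qed
  have G11: "F (Suc 0) = G (Suc 0) (Suc 0)"
  proof -
    have "T = matrix_inv (cmat (D 0))" "d 0 = cmat (D 0)" by (simp_all add: T_def Di_def d_def)
    then have "W ** d 0 = - (F (Suc 0) ** (T ** d 0))"
      by (simp add: W_def weyl_M_def msimps)
    then show ?thesis
      by (simp add: G_def B_def ps1 ph1 S2_def transpose_zero T_def dDi)
  qed
  have Gmain: "F n = G n n \<and> F (Suc n) = G (Suc n) (Suc n)" for n
  proof (induction n)
    case 0
    then show ?case using G11 F0 by (simp add: G_def A_def S1_def ps0 ph0)
  next
    case (Suc n)
    have h1: "G (Suc (Suc n)) (Suc (Suc n)) = G (Suc (Suc n)) (Suc n) - C ** (R (Suc (Suc n)) (Suc (Suc n)) ** F (Suc (Suc n)))"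
      unfolding G_def A_def B_def S1suc S2suc R_def by (simp add: msimps Ccomm csc_simps algebra_simps)
    have h2: "G (Suc (Suc n)) m = Di (Suc n) ** (X ** G (Suc n) m - v (Suc n) ** G (Suc n) m - d n ** G n m)" for m
      unfolding G_def recph[of n] recps[of n] by (simp add: msimps algebra_simps)
    have h3: "G n (Suc n) = G n n - C ** (R n (Suc n) ** F (Suc n))"
      unfolding G_def A_def B_def S1suc S2suc R_def by (simp add: msimps Ccomm csc_simps algebra_simps)
    have IH1: "G n n = F n" and IH2: "G (Suc n) (Suc n) = F (Suc n)" using Suc.IH by simp_all
    have e3: "G n (Suc n) = F n - C ** (Di n ** F (Suc n))"
      by (simp only: h3 R1 IH1)
    have "G (Suc (Suc n)) (Suc (Suc n)) = Di (Suc n) ** (X ** F (Suc n) - v (Suc n) ** F (Suc n) - d n ** (F n - C ** (Di n ** F (Suc n))))"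
      by (simp only: h1 R0 h2[of "Suc n"] e3 IH2 times0_left times0_right diff_zero)
    also have "\<dots> = F (Suc (Suc n))"
      unfolding jrec by (simp add: msimps Ccomm csc_simps dDiA algebra_simps)
    finally show ?case using Suc.IH by simp
  qed
  have fin: "F n = ps n - ph n ** W ** d 0 - C ** ps n ** S1 n + C ** ph n ** S2 n" for n
    using Gmain[of n] by (simp add: G_def A_def B_def msimps Ccomm csc_simps algebra_simps)
  have fin2: "F n =
            neumann_sol D V (complex_of_real x) n
            - dirichlet_sol D V (complex_of_real x) n ** weyl_M D F ** cmat (D 0)
            - mat (\<i> * complex_of_real y) ** neumann_sol D V (complex_of_real x) n **
                (\<Sum>k=1..n. matrix_inv (cmat (D 0)) ** transpose (dirichlet_sol D V (complex_of_real x) k) ** F k)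
            + mat (\<i> * complex_of_real y) ** dirichlet_sol D V (complex_of_real x) n **
                (\<Sum>k=1..n. matrix_inv (cmat (D 0)) ** transpose (neumann_sol D V (complex_of_real x) k) ** F k)" for n
    using fin[of n] unfolding ps_def ph_def W_def d_def C_def S1_def S2_def T_def Di_def by simp
  show ?thesis using fin2 F0 by blast
qed

end
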